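(* Let $(\bar F,\bar\Delta,\bar\nu)$ be a probability preserving dynamical system with transfer operator $\mathcal L$, let $\bar\phi:\bar\Delta\to\mathbb R$ be measurable and set $\mathcal L_{is}h:=\mathcal L(e^{is\bar\phi}h)$ for $s\in\mathbb R$. Let $\mathcal B_1\hookrightarrow\mathcal B_2\hookrightarrow L^1(\bar\nu)$ be complex Banach spaces with $\mathbf 1_{\bar\Delta}\in\mathcal B_1$ on which the operators $\mathcal L_{is}^n$ act, and assume there exist constants $\alpha_1\in(0,1]$, $K,C,\alpha>0$ and an integer $n_0$ such that $$\forall n\ge n_0,\ \forall |s|>K:\qquad \|\mathcal L^n_{is}\|_{\mathcal B_1\to\mathcal B_2}\le C|s|^\alpha e^{-Cn^{\alpha_1}}.$$ Then: (i) there exist $K'>0$, $C'>0$, $\alpha'\ge0$, $\alpha_1'\in(0,1]$, $\hat\delta>0$ and $n_1$ such that for every $|s|>K'$ and every $n\ge n_1$, $\|\mathcal L^n_{is}\|_{\mathcal B_1\to\mathcal B_2}\le C'|s|^{\alpha'}e^{-n^{\alpha_1'}\hat\delta|s|^{-\alpha'}}$; (ii) for every $r\ge0$, every $d_1\in[0,1]$ and every $B>0$ there exists $K''>0$ such that $\displaystyle\int_{K''<|s|<Bn^{(r-1)/2}}\frac{\|\mathcal L^n_{is}\|_{\mathcal B_1\to\mathcal B_2}}{|s|^{d_1}}\,ds=o(n^{-r/2})$ as $n\to\infty$.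
   Context: The transfer operator $\mathcal L$ of $(\bar F,\bar\Delta,\bar\nu)$ is the operator on $L^1(\bar\nu)$ characterized by $\mathbb E_{\bar\nu}(g\cdot h\circ\bar F)=\mathbb E_{\bar\nu}(h\,\mathcal L g)$ for all $g\in L^1$, $h\in L^\infty$. $\hookrightarrow$ denotes continuous embedding. $\|\cdot\|_{\mathcal B_1\to\mathcal B_2}$ is the operator norm from $\mathcal B_1$ to $\mathcal B_2$. *)

theory Defs
  imports "HOL-Probability.Probability" "HOL-Library.Landau_Symbols"
begin

definition prob_preserving_system :: "'a measure \<Rightarrow> ('a \<Rightarrow> 'a) \<Rightarrow> bool" where
  "prob_preserving_system M F \<longleftrightarrow> prob_space M \<and> F \<in> M \<rightarrow>\<^sub>M M \<and> distr M M F = M"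

definition transfer_operator ::
  "'a measure \<Rightarrow> ('a \<Rightarrow> 'a) \<Rightarrow> (('a \<Rightarrow> complex) \<Rightarrow> ('a \<Rightarrow> complex)) \<Rightarrow> bool" where
  "transfer_operator M F L \<longleftrightarrow>
     (\<forall>g. integrable M g \<longrightarrow> integrable M (L g) \<and>
        (\<forall>h::'a \<Rightarrow> complex. h \<in> borel_measurable M \<and> (\<exists>c. \<forall>x\<in>space M. cmod (h x) \<le> c) \<longrightarrow>
           (\<integral>x. g x * h (F x) \<partial>M) = (\<integral>x. h x * L g x \<partial>M)))"

definition complex_banach_in_L1 ::
  "'a measure \<Rightarrow> ('a \<Rightarrow> complex) set \<Rightarrow> (('a \<Rightarrow> complex) \<Rightarrow> real) \<Rightarrow> bool" where
  "complex_banach_in_L1 M B nB \<longleftrightarrow>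
     B \<subseteq> {f. integrable M f} \<and>
     (\<lambda>_. 0) \<in> B \<and>
     (\<forall>f\<in>B. \<forall>g\<in>B. (\<lambda>x. f x + g x) \<in> B) \<and>
     (\<forall>c f. f \<in> B \<longrightarrow> (\<lambda>x. c * f x) \<in> B) \<and>
     (\<forall>f\<in>B. \<forall>g. g \<in> borel_measurable M \<and> (AE x in M. g x = f x) \<longrightarrow> g \<in> B \<and> nB g = nB f) \<and>
     (\<forall>f\<in>B. 0 \<le> nB f) \<and>
     (\<forall>f\<in>B. nB f = 0 \<longleftrightarrow> (AE x in M. f x = 0)) \<and>
     (\<forall>f\<in>B. \<forall>g\<in>B. nB (\<lambda>x. f x + g x) \<le> nB f + nB g) \<and>
     (\<forall>c. \<forall>f\<in>B. nB (\<lambda>x. c * f x) = cmod c * nB f) \<and>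
     (\<forall>X. (\<forall>k. X k \<in> B) \<and>
          (\<forall>e>0. \<exists>N. \<forall>m\<ge>N. \<forall>k\<ge>N. nB (\<lambda>x. X m x - X k x) < e) \<longrightarrow>
          (\<exists>f\<in>B. (\<lambda>k. nB (\<lambda>x. X k x - f x)) \<longlonglongrightarrow> 0))"

definition cont_embedding ::
  "('a \<Rightarrow> complex) set \<Rightarrow> (('a \<Rightarrow> complex) \<Rightarrow> real) \<Rightarrow> ('a \<Rightarrow> complex) set \<Rightarrow> (('a \<Rightarrow> complex) \<Rightarrow> real) \<Rightarrow> bool" where
  "cont_embedding B1 n1 B2 n2 \<longleftrightarrow> B1 \<subseteq> B2 \<and> (\<exists>c. \<forall>f\<in>B1. n2 f \<le> c * n1 f)"

definition L1_embedding ::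
  "'a measure \<Rightarrow> ('a \<Rightarrow> complex) set \<Rightarrow> (('a \<Rightarrow> complex) \<Rightarrow> real) \<Rightarrow> bool" where
  "L1_embedding M B nB \<longleftrightarrow> B \<subseteq> {f. integrable M f} \<and> (\<exists>c. \<forall>f\<in>B. (\<integral>x. cmod (f x) \<partial>M) \<le> c * nB f)"

definition op_norm ::
  "('a \<Rightarrow> complex) set \<Rightarrow> (('a \<Rightarrow> complex) \<Rightarrow> real) \<Rightarrow> (('a \<Rightarrow> complex) \<Rightarrow> real) \<Rightarrow>
   (('a \<Rightarrow> complex) \<Rightarrow> ('a \<Rightarrow> complex)) \<Rightarrow> real" where
  "op_norm B1 n1 n2 T = Sup {n2 (T f) | f. f \<in> B1 \<and> n1 f \<le> 1}"

definition twisted :: "(('a \<Rightarrow> complex) \<Rightarrow> ('a \<Rightarrow> complex)) \<Rightarrow> ('a \<Rightarrow> real) \<Rightarrow> real \<Rightarrow>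
   ('a \<Rightarrow> complex) \<Rightarrow> ('a \<Rightarrow> complex)" where
  "twisted L \<phi> s h = L (\<lambda>x. exp (\<i> * of_real (s * \<phi> x)) * h x)"

end

theory Submission
  imports Defs "HOL-Real_Asymp.Real_Asymp"
begin


lemma pseudo_baire:
  fixes X :: "'b set" and \<rho> :: "'b \<Rightarrow> 'b \<Rightarrow> real" and E :: "nat \<Rightarrow> 'b set"
  assumes nn: "\<And>x y. x\<in>X \<Longrightarrow> y\<in>X \<Longrightarrow> 0 \<le> \<rho> x y"
  and sym: "\<And>x y. x\<in>X \<Longrightarrow> y\<in>X \<Longrightarrow> \<rho> x y = \<rho> y x"
  and refl: "\<And>x. x\<in>X \<Longrightarrow> \<rho> x x = 0"
  and tri: "\<And>x y z. x\<in>X \<Longrightarrow> y\<in>X \<Longrightarrow> z\<in>X \<Longrightarrow> \<rho> x z \<le> \<rho> x y + \<rho> y z"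
  and cpl: "\<And>\<sigma>::nat\<Rightarrow>'b. (\<And>n. \<sigma> n \<in> X) \<Longrightarrow> (\<And>e. e>0 \<Longrightarrow> \<exists>N. \<forall>m\<ge>N. \<forall>n\<ge>N. \<rho> (\<sigma> m) (\<sigma> n) < e)
            \<Longrightarrow> \<exists>x\<in>X. (\<lambda>n. \<rho> (\<sigma> n) x) \<longlonglongrightarrow> 0"
  and ne: "X \<noteq> {}"
  and cov: "\<And>x. x\<in>X \<Longrightarrow> \<exists>k. x \<in> E k" and sub: "\<And>k. E k \<subseteq> X"
  shows "\<exists>k x0 \<epsilon>. x0\<in>X \<and> \<epsilon>>0 \<and> (\<forall>y\<in>X. \<rho> x0 y < \<epsilon> \<longrightarrow> (\<forall>\<delta>>0. \<exists>z\<in>E k. \<rho> y z < \<delta>))"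
proof (rule ccontr)
  assume contra: "\<not> ?thesis"
  define rep where "rep x = (SOME y. y\<in>X \<and> \<rho> x y = 0)" for x
  have rep: "rep x \<in> X \<and> \<rho> x (rep x) = 0" if "x\<in>X" for x
    unfolding rep_def by (rule someI[of _ x]) (use that refl in auto)
  have rep': "\<rho> (rep x) x = 0" if "x\<in>X" for x
    using rep[OF that] sym[OF that] by auto
  have rep_eq: "rep x = rep y" if "x\<in>X" "y\<in>X" "\<rho> x y = 0" for x y
  proof -
    have "(\<lambda>z. z\<in>X \<and> \<rho> x z = 0) = (\<lambda>z. z\<in>X \<and> \<rho> y z = 0)"
    proof (rule ext, safe)
      fix z assume z: "z\<in>X" "\<rho> x z = 0"
      have "\<rho> y z \<le> \<rho> y x + \<rho> x z" using tri that z by blast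
      then show "\<rho> y z = 0" using sym[of x y] that z nn[of y z] by auto
    next
      fix z assume z: "z\<in>X" "\<rho> y z = 0"
      have "\<rho> x z \<le> \<rho> x y + \<rho> y z" using tri that z by blast
      then show "\<rho> x z = 0" using that z nn[of x z] by auto
    qed
    then show ?thesis unfolding rep_def by simp
  qed
  define Mr where "Mr = rep ` X"
  have MrX: "Mr \<subseteq> X" using rep Mr_def by auto
  define d where "d a b = (if a\<in>Mr \<and> b\<in>Mr then \<rho> a b else 0)" for a b
  interpret MS: Metric_space Mr d
  proof
    show "0 \<le> d x y" for x y using nn MrX unfolding d_def by auto
    show "d x y = d y x" for x y using sym MrX unfolding d_def by auto
    show "d x z \<le> d x y + d y z" if "x\<in>Mr" "y\<in>Mr" "z\<in>Mr" for x y z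
      using tri that MrX unfolding d_def by auto
    show "d x y = 0 \<longleftrightarrow> x = y" if xyM: "x\<in>Mr" "y\<in>Mr" for x y
    proof
      assume "d x y = 0"
      then have h: "\<rho> x y = 0" using xyM unfolding d_def by auto
      obtain x' y' where xy: "x'\<in>X" "y'\<in>X" "x = rep x'" "y = rep y'" using xyM Mr_def by auto
      have "\<rho> x' y' \<le> \<rho> x' x + \<rho> x y'" using tri xy rep by blast
      also have "\<rho> x y' \<le> \<rho> x y + \<rho> y y'" using tri xy rep by blast
      finally have "\<rho> x' y' \<le> 0" using h xy rep rep' by auto
      then have "\<rho> x' y' = 0" using nn xy by force
      then show "x = y" using rep_eq xy by auto
    next
      assume "x = y" then show "d x y = 0" using refl MrX xyM unfolding d_def by auto
    qed
  qed
  have cplt: "MS.mcomplete"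
    unfolding MS.mcomplete_def MS.MCauchy_def
  proof (intro allI impI, elim conjE)
    fix \<sigma> :: "nat \<Rightarrow> 'b" assume rg: "range \<sigma> \<subseteq> Mr" and cau: "\<forall>\<epsilon>>0. \<exists>N. \<forall>n n'. N \<le> n \<longrightarrow> N \<le> n' \<longrightarrow> d (\<sigma> n) (\<sigma> n') < \<epsilon>"
    have sX: "\<sigma> n \<in> X" for n using rg MrX by auto
    have "\<exists>x\<in>X. (\<lambda>n. \<rho> (\<sigma> n) x) \<longlonglongrightarrow> 0"
    proof (rule cpl[OF sX])
      fix e :: real assume "e>0"
      then obtain N where "\<forall>n n'. N \<le> n \<longrightarrow> N \<le> n' \<longrightarrow> d (\<sigma> n) (\<sigma> n') < e" using cau by auto
      then show "\<exists>N. \<forall>m\<ge>N. \<forall>n\<ge>N. \<rho> (\<sigma> m) (\<sigma> n) < e" using rg unfolding d_def by (auto simp: image_subset_iff)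
    qed
    then obtain x where x: "x\<in>X" "(\<lambda>n. \<rho> (\<sigma> n) x) \<longlonglongrightarrow> 0" by auto
    have "limitin MS.mtopology \<sigma> (rep x) sequentially"
      unfolding MS.limitin_metric_dist_null
    proof (intro conjI)
      show "rep x \<in> Mr" using x Mr_def by auto
      show "\<forall>\<^sub>F n in sequentially. \<sigma> n \<in> Mr" using rg by (auto intro: always_eventually)
      show "(\<lambda>n. d (\<sigma> n) (rep x)) \<longlonglongrightarrow> 0"
      proof (rule tendsto_sandwich[OF _ _ tendsto_const x(2)])
        show "\<forall>\<^sub>F n in sequentially. 0 \<le> d (\<sigma> n) (rep x)" by simp
        have "d (\<sigma> n) (rep x) \<le> \<rho> (\<sigma> n) x" for n
        proof -
          have "d (\<sigma> n) (rep x) = \<rho> (\<sigma> n) (rep x)" using rg x Mr_def unfolding d_def by auto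
          also have "\<dots> \<le> \<rho> (\<sigma> n) x + \<rho> x (rep x)" using tri sX x rep by blast
          finally show ?thesis using rep x by auto
        qed
        then show "\<forall>\<^sub>F n in sequentially. d (\<sigma> n) (rep x) \<le> \<rho> (\<sigma> n) x" by simp
      qed
    qed
    then show "\<exists>x. limitin MS.mtopology \<sigma> x sequentially" by blast
  qed
  have empty: "MS.mtopology interior_of (MS.mtopology closure_of (rep ` E k)) = {}" for k
  proof (rule ccontr)
    assume "MS.mtopology interior_of (MS.mtopology closure_of (rep ` E k)) \<noteq> {}"
    then obtain a where "a \<in> MS.mtopology interior_of (MS.mtopology closure_of (rep ` E k))" by auto
    then obtain \<epsilon> where a: "a \<in> Mr" "\<epsilon>>0" "MS.mball a \<epsilon> \<subseteq> MS.mtopology closure_of (rep ` E k)"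
      unfolding MS.in_interior_of_mball by auto
    have "\<forall>y\<in>X. \<rho> a y < \<epsilon> \<longrightarrow> (\<forall>\<delta>>0. \<exists>z\<in>E k. \<rho> y z < \<delta>)"
    proof (intro ballI impI allI)
      fix y \<delta> assume y: "y\<in>X" "\<rho> a y < \<epsilon>" and dl: "(\<delta>::real)>0"
      have ry: "rep y \<in> Mr" using y Mr_def by auto
      have "\<rho> a (rep y) \<le> \<rho> a y + \<rho> y (rep y)" using tri a MrX y rep by blast
      then have "d a (rep y) < \<epsilon>" using a ry y rep unfolding d_def by auto
      then have "rep y \<in> MS.mball a \<epsilon>" using a ry by auto
      then have "rep y \<in> MS.mtopology closure_of (rep ` E k)" using a by auto
      then obtain w where w: "w \<in> rep ` E k" "w \<in> MS.mball (rep y) \<delta>"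
        unfolding MS.metric_closure_of using dl by blast
      then obtain z where z: "z \<in> E k" "w = rep z" by auto
      have zX: "z\<in>X" using z sub by auto
      have "\<rho> y z \<le> \<rho> y (rep y) + \<rho> (rep y) z" using tri y rep zX by blast
      also have "\<rho> (rep y) z \<le> \<rho> (rep y) (rep z) + \<rho> (rep z) z" using tri y rep zX by blast
      finally have "\<rho> y z \<le> \<rho> (rep y) (rep z)" using rep rep' y zX by auto
      also have "\<dots> = d (rep y) w" using ry z zX Mr_def unfolding d_def by auto
      also have "\<dots> < \<delta>" using w by auto
      finally show "\<exists>z\<in>E k. \<rho> y z < \<delta>" using z by auto
    qed
    then show False using contra a MrX by blast
  qed
  have "MS.mtopology interior_of \<Union>(range (\<lambda>k. MS.mtopology closure_of (rep ` E k))) = {}"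
    by (rule MS.metric_Baire_category_alt[OF cplt]) (use empty in auto)
  moreover have "\<Union>(range (\<lambda>k. MS.mtopology closure_of (rep ` E k))) = Mr"
  proof
    show "\<Union>(range (\<lambda>k. MS.mtopology closure_of (rep ` E k))) \<subseteq> Mr"
      using closure_of_subset_topspace by fastforce
    show "Mr \<subseteq> \<Union>(range (\<lambda>k. MS.mtopology closure_of (rep ` E k)))"
    proof
      fix a assume "a\<in>Mr"
      then obtain x where x: "x\<in>X" "a = rep x" using Mr_def by auto
      then obtain k where "x \<in> E k" using cov by auto
      then have "a \<in> rep ` E k" using x by auto
      moreover have "rep ` E k \<subseteq> Mr" using sub Mr_def by auto
      ultimately have "a \<in> MS.mtopology closure_of (rep ` E k)"
        using closure_of_subset[of "rep ` E k" MS.mtopology] by auto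
      then show "a \<in> \<Union>(range (\<lambda>k. MS.mtopology closure_of (rep ` E k)))" by auto
    qed
  qed
  ultimately have "Mr = {}" using interior_of_topspace[of MS.mtopology] by simp
  then show False using ne Mr_def by auto
qed



context
  fixes M :: "'a measure" and B :: "('a \<Rightarrow> complex) set" and nB :: "('a \<Rightarrow> complex) \<Rightarrow> real"
  assumes cb: "complex_banach_in_L1 M B nB"
begin

lemma cb_int: "f\<in>B \<Longrightarrow> integrable M f" using cb unfolding complex_banach_in_L1_def by blast
lemma cb_meas: "f\<in>B \<Longrightarrow> f \<in> borel_measurable M" using cb_int by auto
lemma cb_zero: "(\<lambda>_. 0) \<in> B" using cb unfolding complex_banach_in_L1_def by blast
lemma cb_add: "f\<in>B \<Longrightarrow> g\<in>B \<Longrightarrow> (\<lambda>x. f x + g x) \<in> B" using cb unfolding complex_banach_in_L1_def by blast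
lemma cb_scal: "f\<in>B \<Longrightarrow> (\<lambda>x. c * f x) \<in> B" using cb unfolding complex_banach_in_L1_def by blast
lemma cb_lin: "f\<in>B \<Longrightarrow> g\<in>B \<Longrightarrow> (\<lambda>x. a * f x + b * g x) \<in> B"
  using cb_add cb_scal by auto
lemma cb_diff: "f\<in>B \<Longrightarrow> g\<in>B \<Longrightarrow> (\<lambda>x. f x - g x) \<in> B"
  using cb_lin[of f g 1 "-1"] by simp
lemma cb_ae: "f\<in>B \<Longrightarrow> g \<in> borel_measurable M \<Longrightarrow> (AE x in M. g x = f x) \<Longrightarrow> g \<in> B \<and> nB g = nB f"
  using cb unfolding complex_banach_in_L1_def by blast
lemma cb_nn: "f\<in>B \<Longrightarrow> 0 \<le> nB f" using cb unfolding complex_banach_in_L1_def by blast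
lemma cb_zero_iff: "f\<in>B \<Longrightarrow> nB f = 0 \<longleftrightarrow> (AE x in M. f x = 0)" using cb unfolding complex_banach_in_L1_def by blast
lemma cb_tri: "f\<in>B \<Longrightarrow> g\<in>B \<Longrightarrow> nB (\<lambda>x. f x + g x) \<le> nB f + nB g" using cb unfolding complex_banach_in_L1_def by blast
lemma cb_hom: "f\<in>B \<Longrightarrow> nB (\<lambda>x. c * f x) = cmod c * nB f" using cb unfolding complex_banach_in_L1_def by blast
lemma cb_complete: "(\<And>k. X k \<in> B) \<Longrightarrow> (\<forall>e>0. \<exists>N. \<forall>m\<ge>N. \<forall>k\<ge>N. nB (\<lambda>x. X m x - X k x) < e) \<Longrightarrow>
          (\<exists>f\<in>B. (\<lambda>k. nB (\<lambda>x. X k x - f x)) \<longlonglongrightarrow> 0)" using cb unfolding complex_banach_in_L1_def by blast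
lemma cb_n0: "nB (\<lambda>_. 0) = 0" using cb_zero_iff[OF cb_zero] by simp
lemma cb_sym: "f\<in>B \<Longrightarrow> g\<in>B \<Longrightarrow> nB (\<lambda>x. f x - g x) = nB (\<lambda>x. g x - f x)"
proof -
  assume a: "f\<in>B" "g\<in>B"
  have "nB (\<lambda>x. f x - g x) = nB (\<lambda>x. (-1) * (g x - f x))" by (simp add: algebra_simps)
  also have "\<dots> = cmod (-1) * nB (\<lambda>x. g x - f x)" by (rule cb_hom[OF cb_diff[OF a(2,1)]])
  finally show ?thesis by simp
qed
lemma cb_tri3: "f\<in>B \<Longrightarrow> g\<in>B \<Longrightarrow> h\<in>B \<Longrightarrow> nB (\<lambda>x. f x - h x) \<le> nB (\<lambda>x. f x - g x) + nB (\<lambda>x. g x - h x)"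
proof -
  assume a: "f\<in>B" "g\<in>B" "h\<in>B"
  have "nB (\<lambda>x. f x - h x) = nB (\<lambda>x. (f x - g x) + (g x - h x))" by simp
  also have "\<dots> \<le> nB (\<lambda>x. f x - g x) + nB (\<lambda>x. g x - h x)" using cb_tri cb_diff a by blast
  finally show ?thesis .
qed
lemma cb_refl: "nB (\<lambda>x. f x - f x) = 0" using cb_n0 by simp
lemma cb_neg: "f\<in>B \<Longrightarrow> nB (\<lambda>x. - f x) = nB f"
  using cb_hom[of f "-1"] by simp

end



lemma closed_graph:
  fixes M :: "'a measure" and T :: "('a \<Rightarrow> complex) \<Rightarrow> ('a \<Rightarrow> complex)"
  assumes b1: "complex_banach_in_L1 M B1 n1" and b2: "complex_banach_in_L1 M B2 n2"
  and maps: "\<And>f. f\<in>B1 \<Longrightarrow> T f \<in> B2"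
  and lin: "\<And>a b f g. f\<in>B1 \<Longrightarrow> g\<in>B1 \<Longrightarrow> AE x in M. T (\<lambda>x. a * f x + b * g x) x = a * T f x + b * T g x"
  and closed: "\<And>X f g. (\<And>k. X k \<in> B1) \<Longrightarrow> f\<in>B1 \<Longrightarrow> g\<in>B2 \<Longrightarrow> (\<lambda>k. n1 (\<lambda>x. X k x - f x)) \<longlonglongrightarrow> 0
        \<Longrightarrow> (\<lambda>k. n2 (\<lambda>x. T (X k) x - g x)) \<longlonglongrightarrow> 0 \<Longrightarrow> AE x in M. T f x = g x"
  shows "\<exists>c\<ge>0. \<forall>f\<in>B1. n2 (T f) \<le> c * n1 f"
proof -
  have Tlin: "n2 (T (\<lambda>x. a * f x + b * g x)) \<le> cmod a * n2 (T f) + cmod b * n2 (T g)"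
    if fg: "f\<in>B1" "g\<in>B1" for a b f g
  proof -
    have in2: "(\<lambda>x. a * T f x + b * T g x) \<in> B2" using cb_lin[OF b2] maps fg by blast
    have "n2 (T (\<lambda>x. a * f x + b * g x)) = n2 (\<lambda>x. a * T f x + b * T g x)"
      using cb_ae[OF b2 in2] lin[OF fg] cb_meas[OF b2] maps cb_lin[OF b1 fg] by blast
    also have "\<dots> \<le> n2 (\<lambda>x. a * T f x) + n2 (\<lambda>x. b * T g x)"
      using cb_tri[OF b2] cb_scal[OF b2] maps fg by blast
    also have "\<dots> = cmod a * n2 (T f) + cmod b * n2 (T g)"
      using cb_hom[OF b2] maps fg by simp
    finally show ?thesis .
  qed
  have Tscal: "n2 (T (\<lambda>x. a * f x)) = cmod a * n2 (T f)" if f: "f\<in>B1" for a f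
  proof -
    have in2: "(\<lambda>x. a * T f x) \<in> B2" using cb_scal[OF b2] maps f by blast
    have "AE x in M. T (\<lambda>x. a * f x + 0 * f x) x = a * T f x + 0 * T f x" using lin[OF f f] .
    then have "AE x in M. T (\<lambda>x. a * f x) x = a * T f x" by simp
    then have "n2 (T (\<lambda>x. a * f x)) = n2 (\<lambda>x. a * T f x)"
      using cb_ae[OF b2 in2] cb_meas[OF b2] maps cb_scal[OF b1 f] by blast
    then show ?thesis using cb_hom[OF b2] maps f by simp
  qed
  define E where "E k = {f\<in>B1. n2 (T f) \<le> real k}" for k
  define \<rho> where "\<rho> f g = n1 (\<lambda>x. f x - g x)" for f g
  have "\<exists>k x0 \<epsilon>. x0\<in>B1 \<and> \<epsilon>>0 \<and> (\<forall>y\<in>B1. \<rho> x0 y < \<epsilon> \<longrightarrow> (\<forall>\<delta>>0. \<exists>z\<in>E k. \<rho> y z < \<delta>))"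
  proof (rule pseudo_baire)
    show "0 \<le> \<rho> x y" if "x\<in>B1" "y\<in>B1" for x y using cb_nn[OF b1] cb_diff[OF b1] that unfolding \<rho>_def by blast
    show "\<rho> x y = \<rho> y x" if "x\<in>B1" "y\<in>B1" for x y using cb_sym[OF b1] that unfolding \<rho>_def by blast
    show "\<rho> x x = 0" if "x\<in>B1" for x using cb_refl[OF b1] unfolding \<rho>_def by blast
    show "\<rho> x z \<le> \<rho> x y + \<rho> y z" if "x\<in>B1" "y\<in>B1" "z\<in>B1" for x y z
      using cb_tri3[OF b1] that unfolding \<rho>_def by blast
    show "\<exists>x\<in>B1. (\<lambda>n. \<rho> (\<sigma> n) x) \<longlonglongrightarrow> 0"
      if "\<And>n. \<sigma> n \<in> B1" "\<And>e. e>0 \<Longrightarrow> \<exists>N. \<forall>m\<ge>N. \<forall>n\<ge>N. \<rho> (\<sigma> m) (\<sigma> n) < e" for \<sigma> :: "nat \<Rightarrow> 'a \<Rightarrow> complex"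
      using cb_complete[OF b1, of \<sigma>] that unfolding \<rho>_def by blast
    show "B1 \<noteq> {}" using cb_zero[OF b1] by blast
    show "\<exists>k. x \<in> E k" if "x\<in>B1" for x
      using that real_arch_simple[of "n2 (T x)"] unfolding E_def by auto
    show "E k \<subseteq> B1" for k unfolding E_def by auto
  qed
  then obtain k x0 \<epsilon> where x0: "x0\<in>B1" and eps: "\<epsilon>>0"
    and bai: "\<And>y \<delta>. y\<in>B1 \<Longrightarrow> \<rho> x0 y < \<epsilon> \<Longrightarrow> \<delta>>0 \<Longrightarrow> \<exists>z\<in>E k. \<rho> y z < \<delta>" by blast
  have stepB: "\<exists>d\<in>B1. n2 (T d) \<le> 2 * real k \<and> n1 (\<lambda>x. g x - d x) < \<delta>"
    if g: "g\<in>B1" "n1 g < \<epsilon>" and dl: "\<delta>>0" for g \<delta>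
  proof -
    define y where "y = (\<lambda>x. x0 x + g x)"
    have y: "y\<in>B1" using cb_add[OF b1 x0 g(1)] y_def by simp
    have "\<rho> x0 y = n1 (\<lambda>x. - g x)" unfolding \<rho>_def y_def by simp
    also have "\<dots> = n1 g" using cb_neg[OF b1 g(1)] .
    finally have "\<rho> x0 y < \<epsilon>" using g by simp
    then obtain z where z: "z\<in>E k" "\<rho> y z < \<delta>/2" using bai[OF y] dl by (meson half_gt_zero)
    have "\<rho> x0 x0 < \<epsilon>" using eps cb_refl[OF b1] unfolding \<rho>_def by simp
    then obtain w where w: "w\<in>E k" "\<rho> x0 w < \<delta>/2" using bai[OF x0] dl by (meson half_gt_zero)
    have zB: "z\<in>B1" "w\<in>B1" using z w unfolding E_def by auto
    define d where "d = (\<lambda>x. 1 * z x + (-1) * w x)"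
    have dB: "d\<in>B1" unfolding d_def using cb_lin[OF b1 zB] .
    have "n2 (T d) \<le> cmod 1 * n2 (T z) + cmod (-1) * n2 (T w)" unfolding d_def by (rule Tlin[OF zB])
    also have "\<dots> \<le> 2 * real k" using z w unfolding E_def by auto
    finally have 1: "n2 (T d) \<le> 2 * real k" .
    have "(\<lambda>x. g x - d x) = (\<lambda>x. (y x - z x) + (-1) * (x0 x - w x))"
      unfolding d_def y_def by (rule ext) (simp add: algebra_simps)
    then have "n1 (\<lambda>x. g x - d x) \<le> n1 (\<lambda>x. y x - z x) + n1 (\<lambda>x. (-1) * (x0 x - w x))"
      using cb_tri[OF b1] cb_diff[OF b1] cb_scal[OF b1] y x0 zB by simp
    also have "\<dots> = \<rho> y z + \<rho> x0 w" using cb_hom[OF b1 cb_diff[OF b1 x0 zB(2)], of "-1"] unfolding \<rho>_def by simp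
    also have "\<dots> < \<delta>" using z w by simp
    finally show ?thesis using 1 dB by blast
  qed
  have stepC: "\<exists>d\<in>B1. n2 (T d) \<le> 2 * real k * t \<and> n1 (\<lambda>x. g x - d x) < \<delta>"
    if g: "g\<in>B1" "n1 g < \<epsilon> * t" and t: "t > 0" and dl: "\<delta>>0" for g t \<delta>
  proof -
    define g' where "g' = (\<lambda>x. complex_of_real (1/t) * g x)"
    have g'B: "g'\<in>B1" unfolding g'_def by (rule cb_scal[OF b1 g(1)])
    have "n1 g' = cmod (complex_of_real (1/t)) * n1 g" unfolding g'_def by (rule cb_hom[OF b1 g(1)])
    also have "\<dots> = n1 g / t" using t by (simp add: norm_divide)
    also have "\<dots> < \<epsilon>" using g t by (simp add: divide_less_eq mult.commute)
    finally obtain d' where d': "d'\<in>B1" "n2 (T d') \<le> 2 * real k" "n1 (\<lambda>x. g' x - d' x) < \<delta>/t"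
      using stepB[OF g'B _, of "\<delta>/t"] dl t by auto
    define d where "d = (\<lambda>x. complex_of_real t * d' x)"
    have dB: "d\<in>B1" unfolding d_def by (rule cb_scal[OF b1 d'(1)])
    have "n2 (T d) = cmod (complex_of_real t) * n2 (T d')" unfolding d_def by (rule Tscal[OF d'(1)])
    also have "\<dots> = t * n2 (T d')" using t by simp
    also have "\<dots> \<le> 2 * real k * t" using d' t by simp
    finally have 1: "n2 (T d) \<le> 2 * real k * t" .
    have "(\<lambda>x. g x - d x) = (\<lambda>x. complex_of_real t * (g' x - d' x))"
      unfolding g'_def d_def using t by (auto simp: algebra_simps)
    then have "n1 (\<lambda>x. g x - d x) = cmod (complex_of_real t) * n1 (\<lambda>x. g' x - d' x)"
      using cb_hom[OF b1 cb_diff[OF b1 g'B d'(1)]] by metis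
    also have "\<dots> = t * n1 (\<lambda>x. g' x - d' x)" using t by simp
    also have "\<dots> < \<delta>" using d' t by (simp add: less_divide_eq mult.commute)
    finally show ?thesis using 1 dB by blast
  qed
  have stepD: "n2 (T g0) \<le> 4 * real k" if g0: "g0\<in>B1" "n1 g0 < \<epsilon>" for g0
  proof -
    define Dsel where "Dsel h j = (SOME d. d\<in>B1 \<and> n2 (T d) \<le> 2 * real k * (1/2)^j \<and> n1 (\<lambda>x. h x - d x) < \<epsilon> * (1/2)^(Suc j))"
      for h :: "'a \<Rightarrow> complex" and j :: nat
    define S where "S = rec_nat (\<lambda>x. 0) (\<lambda>j s. \<lambda>x. s x + Dsel (\<lambda>x. g0 x - s x) j x)"
    define dd where "dd j = Dsel (\<lambda>x. g0 x - S j x) j" for j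
    have S0: "S 0 = (\<lambda>x. 0)" unfolding S_def by simp
    have SS: "S (Suc j) = (\<lambda>x. S j x + dd j x)" for j unfolding S_def dd_def by simp
    have Dsel: "Dsel h j \<in> B1 \<and> n2 (T (Dsel h j)) \<le> 2 * real k * (1/2)^j \<and> n1 (\<lambda>x. h x - Dsel h j x) < \<epsilon> * (1/2)^(Suc j)"
      if h: "h\<in>B1" "n1 h < \<epsilon> * (1/2)^j" for h j
    proof -
      have "\<exists>d\<in>B1. n2 (T d) \<le> 2 * real k * (1/2)^j \<and> n1 (\<lambda>x. h x - d x) < \<epsilon> * (1/2)^(Suc j)"
        by (rule stepC[OF h]) (use eps in auto)
      then show ?thesis unfolding Dsel_def by (rule someI2_bex) auto
    qed
    have inv: "S j \<in> B1 \<and> n1 (\<lambda>x. g0 x - S j x) < \<epsilon> * (1/2)^j" for j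
    proof (induction j)
      case 0 show ?case using S0 cb_zero[OF b1] g0 by simp
    next
      case (Suc j)
      have hB: "(\<lambda>x. g0 x - S j x) \<in> B1" using cb_diff[OF b1 g0(1)] Suc by blast
      have D: "dd j \<in> B1" "n1 (\<lambda>x. (g0 x - S j x) - dd j x) < \<epsilon> * (1/2)^(Suc j)"
        using Dsel[OF hB] Suc unfolding dd_def by auto
      have "S (Suc j) \<in> B1" unfolding SS using cb_add[OF b1] Suc D by blast
      moreover have "(\<lambda>x. g0 x - S (Suc j) x) = (\<lambda>x. (g0 x - S j x) - dd j x)" unfolding SS
        by (rule ext) (simp add: algebra_simps)
      ultimately show ?case using D by simp
    qed
    have ddp: "dd j \<in> B1 \<and> n2 (T (dd j)) \<le> 2 * real k * (1/2)^j" for j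
    proof -
      have hB: "(\<lambda>x. g0 x - S j x) \<in> B1" using cb_diff[OF b1 g0(1)] inv by blast
      then show ?thesis using Dsel[OF hB] inv unfolding dd_def by auto
    qed
    define v where "v m = (\<lambda>x. \<Sum>j<m. T (dd j) x)" for m
    have v0: "v 0 = (\<lambda>x. 0)" unfolding v_def by simp
    have vS: "v (Suc m) = (\<lambda>x. v m x + T (dd m) x)" for m unfolding v_def by simp
    have vB: "v m \<in> B2" for m
    proof (induction m)
      case 0 then show ?case using v0 cb_zero[OF b2] by simp
    next
      case (Suc m) then show ?case unfolding vS using cb_add[OF b2] maps ddp by blast
    qed
    have TSv: "AE x in M. T (S m) x = v m x" for m
    proof (induction m)
      case 0
      have "AE x in M. T (\<lambda>x. 0 * g0 x + 0 * g0 x) x = 0 * T g0 x + 0 * T g0 x" by (rule lin[OF g0(1) g0(1)])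
      then show ?case using S0 v0 by simp
    next
      case (Suc m)
      have "AE x in M. T (\<lambda>x. 1 * S m x + 1 * dd m x) x = 1 * T (S m) x + 1 * T (dd m) x"
        by (rule lin) (use inv ddp in auto)
      then show ?case using Suc unfolding SS vS by eventually_elim simp
    qed
    have vdiff: "n2 (\<lambda>x. v (m+p) x - v m x) \<le> 4 * real k * ((1/2)^m - (1/2)^(m+p))" for m p
    proof (induction p)
      case 0 then show ?case using cb_refl[OF b2] by simp
    next
      case (Suc p)
      have "(\<lambda>x. v (m + Suc p) x - v m x) = (\<lambda>x. (v (m+p) x - v m x) + T (dd (m+p)) x)"
        unfolding add_Suc_right vS by (rule ext) simp
      then have "n2 (\<lambda>x. v (m + Suc p) x - v m x) \<le> n2 (\<lambda>x. v (m+p) x - v m x) + n2 (T (dd (m+p)))"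
        using cb_tri[OF b2] cb_diff[OF b2] vB maps ddp by simp
      also have "\<dots> \<le> 4 * real k * ((1/2)^m - (1/2)^(m+p)) + 2 * real k * (1/2)^(m+p)"
        using Suc ddp by (meson add_mono)
      also have "\<dots> = 4 * real k * ((1/2)^m - (1/2)^(m + Suc p))" by (simp add: algebra_simps)
      finally show ?case .
    qed
    have vdiff': "n2 (\<lambda>x. v m' x - v m x) \<le> 4 * real k * (1/2)^N" if "N \<le> m" "N \<le> m'" for m m' N
    proof -
      have gen: "n2 (\<lambda>x. v b x - v a x) \<le> 4 * real k * (1/2)^N" if "N \<le> a" "a \<le> b" for a b
      proof -
        have "n2 (\<lambda>x. v b x - v a x) \<le> 4 * real k * ((1/2)^a - (1/2)^b)"
          using vdiff[of a "b - a"] that by simp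
        also have "\<dots> \<le> 4 * real k * (1/2)^a" by (simp add: mult_left_mono)
        also have "\<dots> \<le> 4 * real k * (1/2)^N" using that by (simp add: mult_left_mono power_decreasing)
        finally show ?thesis .
      qed
      show ?thesis
      proof (cases "m \<le> m'")
        case True then show ?thesis using gen that by blast
      next
        case False
        then have "n2 (\<lambda>x. v m x - v m' x) \<le> 4 * real k * (1/2)^N" using gen that by simp
        then show ?thesis using cb_sym[OF b2 vB vB] by metis
      qed
    qed
    have "\<forall>e>0. \<exists>N. \<forall>m\<ge>N. \<forall>m'\<ge>N. n2 (\<lambda>x. v m x - v m' x) < e"
    proof (intro allI impI)
      fix e :: real assume e: "e > 0"
      obtain N where N: "(1/2)^N < e / (4 * real k + 1)"
        using real_arch_pow_inv[of "e / (4 * real k + 1)" "1/2"] e by auto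
      have "4 * real k * (1/2)^N \<le> (4 * real k + 1) * (1/2)^N" by simp
      also have "\<dots> < e" using N e by (simp add: less_divide_eq mult.commute)
      finally show "\<exists>N. \<forall>m\<ge>N. \<forall>m'\<ge>N. n2 (\<lambda>x. v m x - v m' x) < e" using vdiff' by (meson le_less_trans)
    qed
    then obtain y where y: "y\<in>B2" "(\<lambda>m. n2 (\<lambda>x. v m x - y x)) \<longlonglongrightarrow> 0"
      using cb_complete[OF b2, of v] vB by blast
    have "AE x in M. T g0 x = y x"
    proof (rule closed[of S])
      show "S m \<in> B1" for m using inv by blast
      show "g0 \<in> B1" "y \<in> B2" by fact+
      show "(\<lambda>m. n1 (\<lambda>x. S m x - g0 x)) \<longlonglongrightarrow> 0"
      proof (rule tendsto_sandwich[OF _ _ tendsto_const])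
        show "\<forall>\<^sub>F m in sequentially. 0 \<le> n1 (\<lambda>x. S m x - g0 x)"
          using cb_nn[OF b1] cb_diff[OF b1] inv g0 by (blast intro: always_eventually)
        show "\<forall>\<^sub>F m in sequentially. n1 (\<lambda>x. S m x - g0 x) \<le> \<epsilon> * (1/2)^m"
          using inv cb_sym[OF b1] g0 by (intro always_eventually allI) (metis less_imp_le)
        show "(\<lambda>m. \<epsilon> * (1/2)^m) \<longlonglongrightarrow> 0"
          by (intro tendsto_mult_right_zero LIMSEQ_power_zero) simp
      qed
      have "n2 (\<lambda>x. T (S m) x - y x) = n2 (\<lambda>x. v m x - y x)" for m
      proof -
        have "AE x in M. T (S m) x - y x = v m x - y x" using TSv[of m] by eventually_elim simp
        moreover have "(\<lambda>x. T (S m) x - y x) \<in> borel_measurable M"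
          using cb_meas[OF b2 cb_diff[OF b2 maps y(1)]] inv by blast
        ultimately show ?thesis using cb_ae[OF b2 cb_diff[OF b2 vB y(1)]] by blast
      qed
      then show "(\<lambda>m. n2 (\<lambda>x. T (S m) x - y x)) \<longlonglongrightarrow> 0" using y(2) by simp
    qed
    then have Ty: "n2 (T g0) = n2 y" using cb_ae[OF b2 y(1)] cb_meas[OF b2] maps g0 by blast
    have vb: "n2 (v m) \<le> 4 * real k" for m
    proof -
      have "n2 (v m) = n2 (\<lambda>x. v (0+m) x - v 0 x)" using v0 by simp
      also have "\<dots> \<le> 4 * real k * ((1/2)^0 - (1/2)^(0+m))" by (rule vdiff)
      also have "\<dots> \<le> 4 * real k * 1" by (intro mult_left_mono) auto
      finally show ?thesis by simp
    qed
    have yb: "n2 y \<le> 4 * real k + n2 (\<lambda>x. v m x - y x)" for m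
    proof -
      have "n2 y \<le> n2 (v m) + n2 (\<lambda>x. y x - v m x)"
        using cb_tri3[OF b2 y(1) vB cb_zero[OF b2]] by (simp add: add.commute)
      then show ?thesis using vb[of m] cb_sym[OF b2 y(1) vB] by simp
    qed
    have "n2 y \<le> 4 * real k"
    proof (rule ccontr)
      assume "\<not> ?thesis"
      then have "n2 y - 4 * real k > 0" by simp
      then have "\<forall>\<^sub>F m in sequentially. n2 (\<lambda>x. v m x - y x) < n2 y - 4 * real k"
        by (rule order_tendstoD(2)[OF y(2)])
      then obtain m where "n2 (\<lambda>x. v m x - y x) < n2 y - 4 * real k"
        unfolding eventually_sequentially by blast
      then show False using yb[of m] by simp
    qed
    then show ?thesis using Ty by simp
  qed
  have kk: "0 \<le> 8 * real k / \<epsilon>" using eps by simp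
  have "\<forall>f\<in>B1. n2 (T f) \<le> 8 * real k / \<epsilon> * n1 f"
  proof
    fix f assume f: "f\<in>B1"
    have n1f: "0 \<le> n1 f" using cb_nn[OF b1 f] .
    have n2f: "0 \<le> n2 (T f)" using cb_nn[OF b2 maps[OF f]] .
    show "n2 (T f) \<le> 8 * real k / \<epsilon> * n1 f"
    proof (cases "n1 f = 0")
      case True
      show ?thesis
      proof (rule ccontr)
        assume "\<not> ?thesis"
        then have pos: "n2 (T f) > 0" using True by simp
        define t where "t = (4 * real k + 1) / n2 (T f)"
        have t: "t > 0" using pos t_def by simp
        define g where "g = (\<lambda>x. complex_of_real t * f x)"
        have gB: "g\<in>B1" unfolding g_def by (rule cb_scal[OF b1 f])
        have "n1 g = cmod (complex_of_real t) * n1 f" unfolding g_def by (rule cb_hom[OF b1 f])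
        then have "n1 g < \<epsilon>" using True eps by simp
        then have "n2 (T g) \<le> 4 * real k" by (rule stepD[OF gB])
        moreover have "n2 (T g) = cmod (complex_of_real t) * n2 (T f)" unfolding g_def by (rule Tscal[OF f])
        moreover have "cmod (complex_of_real t) * n2 (T f) = t * n2 (T f)" using t by simp
        moreover have "t * n2 (T f) = 4 * real k + 1" using pos unfolding t_def by simp
        ultimately show False by simp
      qed
    next
      case False
      then have pos: "n1 f > 0" using n1f by simp
      define t where "t = \<epsilon> / (2 * n1 f)"
      have t: "t > 0" using pos eps t_def by simp
      define g where "g = (\<lambda>x. complex_of_real t * f x)"
      have gB: "g\<in>B1" unfolding g_def by (rule cb_scal[OF b1 f])
      have "n1 g = cmod (complex_of_real t) * n1 f" unfolding g_def by (rule cb_hom[OF b1 f])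
      also have "\<dots> = t * n1 f" using t by simp
      also have "\<dots> = \<epsilon> / 2" using pos unfolding t_def by simp
      finally have "n1 g < \<epsilon>" using eps by simp
      then have "n2 (T g) \<le> 4 * real k" by (rule stepD[OF gB])
      moreover have "n2 (T g) = cmod (complex_of_real t) * n2 (T f)" unfolding g_def by (rule Tscal[OF f])
      ultimately have "t * n2 (T f) \<le> 4 * real k" using t by simp
      then have "\<epsilon> * n2 (T f) \<le> 8 * real k * n1 f" using pos t_def by (simp add: field_simps)
      then show ?thesis using eps by (simp add: field_simps)
    qed
  qed
  then show ?thesis using kk by blast
qed



definition hs :: "complex \<Rightarrow> complex" where
  "hs z = complex_of_real (cmod z) / z"

lemma hs_mult: "hs z * z = complex_of_real (cmod z)"
  unfolding hs_def by (cases "z = 0") auto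

lemma hs_bound: "cmod (hs z) \<le> 1"
  unfolding hs_def by (cases "z = 0") (auto simp: norm_divide)

lemma hs_meas[measurable]: "u \<in> borel_measurable M \<Longrightarrow> (\<lambda>x. hs (u x)) \<in> borel_measurable M"
  unfolding hs_def by measurable

lemma int_bounded_mult:
  assumes "integrable M g" "h \<in> borel_measurable M" "\<forall>x\<in>space M. cmod (h x) \<le> 1"
  shows "integrable M (\<lambda>x. h x * g x)"
proof (rule Bochner_Integration.integrable_bound[OF assms(1)])
  show "(\<lambda>x. h x * g x) \<in> borel_measurable M" using assms by measurable
  show "AE x in M. norm (h x * g x) \<le> norm (g x)"
    using assms(3) by (intro AE_I2) (auto simp: norm_mult intro: mult_left_le_one_le)
qed

lemma int_hs: "integrable M u \<Longrightarrow> (\<integral>x. hs (u x) * u x \<partial>M) = complex_of_real (\<integral>x. cmod (u x) \<partial>M)"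
  by (simp add: hs_mult)

lemma ae_zero_test:
  fixes u :: "'a \<Rightarrow> complex"
  assumes u: "integrable M u"
  and t: "\<And>h. h\<in>borel_measurable M \<Longrightarrow> (\<forall>x\<in>space M. cmod (h x) \<le> 1) \<Longrightarrow> (\<integral>x. h x * u x \<partial>M) = 0"
  shows "AE x in M. u x = 0"
proof -
  have "(\<integral>x. hs (u x) * u x \<partial>M) = 0" by (rule t) (use u hs_bound in auto)
  then have "(\<integral>x. cmod (u x) \<partial>M) = 0" using int_hs[OF u] by simp
  then have "AE x in M. cmod (u x) = 0" using integral_nonneg_eq_0_iff_AE[of M "\<lambda>x. cmod (u x)"] u by auto
  then show ?thesis by simp
qed

context
  fixes M :: "'a measure" and F :: "'a \<Rightarrow> 'a" and L :: "('a \<Rightarrow> complex) \<Rightarrow> ('a \<Rightarrow> complex)"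
  assumes sys: "prob_preserving_system M F" and tr: "transfer_operator M F L"
begin

lemma F_meas: "F \<in> M \<rightarrow>\<^sub>M M" using sys unfolding prob_preserving_system_def by blast

lemma tr_int: "integrable M g \<Longrightarrow> integrable M (L g)"
  using tr unfolding transfer_operator_def by blast

lemma tr_id: "integrable M g \<Longrightarrow> h \<in> borel_measurable M \<Longrightarrow> (\<forall>x\<in>space M. cmod (h x) \<le> 1) \<Longrightarrow>
   (\<integral>x. h x * L g x \<partial>M) = (\<integral>x. g x * h (F x) \<partial>M)"
  using tr unfolding transfer_operator_def by (metis (no_types, lifting))

lemma hF: "h \<in> borel_measurable M \<Longrightarrow> (\<forall>x\<in>space M. cmod (h x) \<le> 1) \<Longrightarrow>
   (\<lambda>x. h (F x)) \<in> borel_measurable M \<and> (\<forall>x\<in>space M. cmod (h (F x)) \<le> 1)"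
  using measurable_space[OF F_meas] by (auto intro: measurable_compose[OF F_meas])

lemma tr_lin:
  assumes g: "integrable M g1" "integrable M g2" "integrable M g3"
    and ae: "AE x in M. g3 x = a * g1 x + b * g2 x"
  shows "AE x in M. L g3 x = a * L g1 x + b * L g2 x"
proof -
  define u where "u x = L g3 x - (a * L g1 x + b * L g2 x)" for x
  have Li: "integrable M (L g1)" "integrable M (L g2)" "integrable M (L g3)" using tr_int g by auto
  have "AE x in M. u x = 0"
  proof (rule ae_zero_test)
    show "integrable M u" unfolding u_def using Li by auto
    fix h assume h: "h\<in>borel_measurable M" "\<forall>x\<in>space M. cmod (h x) \<le> 1"
    have hi: "integrable M (\<lambda>x. h x * L g1 x)" "integrable M (\<lambda>x. h x * L g2 x)" "integrable M (\<lambda>x. h x * L g3 x)"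
      using int_bounded_mult[OF _ h] Li by auto
    have hF': "(\<lambda>x. h (F x)) \<in> borel_measurable M" "\<forall>x\<in>space M. cmod (h (F x)) \<le> 1" using hF[OF h] by auto
    have gi: "integrable M (\<lambda>x. h (F x) * g1 x)" "integrable M (\<lambda>x. h (F x) * g2 x)" "integrable M (\<lambda>x. h (F x) * g3 x)"
      using int_bounded_mult[OF _ hF'] g by auto
    have "(\<integral>x. h x * u x \<partial>M) = (\<integral>x. h x * L g3 x - (a * (h x * L g1 x) + b * (h x * L g2 x)) \<partial>M)"
      unfolding u_def by (simp add: algebra_simps)
    also have "\<dots> = (\<integral>x. h x * L g3 x \<partial>M) - (a * (\<integral>x. h x * L g1 x \<partial>M) + b * (\<integral>x. h x * L g2 x \<partial>M))"
      using hi by simp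
    also have "\<dots> = (\<integral>x. g3 x * h (F x) \<partial>M) - (a * (\<integral>x. g1 x * h (F x) \<partial>M) + b * (\<integral>x. g2 x * h (F x) \<partial>M))"
      using tr_id[OF _ h] g by simp
    also have "\<dots> = (\<integral>x. h (F x) * g3 x - (a * (h (F x) * g1 x) + b * (h (F x) * g2 x)) \<partial>M)"
      using gi by (simp add: mult.commute)
    also have "\<dots> = (\<integral>x. 0 \<partial>M)"
    proof (rule integral_cong_AE)
      have "integrable M (\<lambda>x. h (F x) * g3 x - (a * (h (F x) * g1 x) + b * (h (F x) * g2 x)))"
        using gi by simp
      then show "(\<lambda>x. h (F x) * g3 x - (a * (h (F x) * g1 x) + b * (h (F x) * g2 x))) \<in> borel_measurable M"
        by (rule borel_measurable_integrable)
      show "(\<lambda>x. 0) \<in> borel_measurable M" by simp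
      show "AE x in M. h (F x) * g3 x - (a * (h (F x) * g1 x) + b * (h (F x) * g2 x)) = 0"
        using ae by eventually_elim (simp add: algebra_simps)
    qed
    finally show "(\<integral>x. h x * u x \<partial>M) = 0" by simp
  qed
  then show ?thesis unfolding u_def by eventually_elim simp
qed

lemma tr_contr:
  assumes g: "integrable M g"
  shows "(\<integral>x. cmod (L g x) \<partial>M) \<le> (\<integral>x. cmod (g x) \<partial>M)"
proof -
  have Li: "integrable M (L g)" using tr_int g by auto
  define h where "h x = hs (L g x)" for x
  have h: "h \<in> borel_measurable M" "\<forall>x\<in>space M. cmod (h x) \<le> 1" unfolding h_def using Li hs_bound by auto
  have hF': "(\<lambda>x. h (F x)) \<in> borel_measurable M" "\<forall>x\<in>space M. cmod (h (F x)) \<le> 1" using hF[OF h] by auto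
  have gi: "integrable M (\<lambda>x. h (F x) * g x)" using int_bounded_mult[OF g hF'] .
  have "complex_of_real (\<integral>x. cmod (L g x) \<partial>M) = (\<integral>x. h x * L g x \<partial>M)" unfolding h_def using int_hs[OF Li] by simp
  also have "\<dots> = (\<integral>x. g x * h (F x) \<partial>M)" by (rule tr_id[OF g h])
  finally have eq: "complex_of_real (\<integral>x. cmod (L g x) \<partial>M) = (\<integral>x. h (F x) * g x \<partial>M)" by (simp add: mult.commute)
  have "(\<integral>x. cmod (L g x) \<partial>M) = cmod (complex_of_real (\<integral>x. cmod (L g x) \<partial>M))"
    by (simp add: integral_nonneg_AE)
  also have "\<dots> \<le> (\<integral>x. cmod (h (F x) * g x) \<partial>M)" unfolding eq by (rule Bochner_Integration.integral_norm_bound)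
  also have "\<dots> \<le> (\<integral>x. cmod (g x) \<partial>M)"
  proof (rule integral_mono)
    show "integrable M (\<lambda>x. cmod (h (F x) * g x))" using gi by simp
    show "integrable M (\<lambda>x. cmod (g x))" using g by simp
    fix x assume "x \<in> space M"
    then show "cmod (h (F x) * g x) \<le> cmod (g x)" using hF'(2)
      unfolding norm_mult by (auto intro: mult_left_le_one_le)
  qed
  finally show ?thesis .
qed

end


context
  fixes M :: "'a measure" and F :: "'a \<Rightarrow> 'a" and L :: "('a \<Rightarrow> complex) \<Rightarrow> ('a \<Rightarrow> complex)"
    and \<phi> :: "'a \<Rightarrow> real"
  assumes sys: "prob_preserving_system M F" and tr: "transfer_operator M F L"
    and phi: "\<phi> \<in> borel_measurable M"
begin

lemma e_meas: "(\<lambda>x. exp (\<i> * complex_of_real (s * \<phi> x))) \<in> borel_measurable M"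
  using phi by measurable

lemma e_norm: "cmod (exp (\<i> * complex_of_real (s * \<phi> x))) = 1"
  by (rule norm_exp_i_times)

lemma e_int: "integrable M f \<Longrightarrow> integrable M (\<lambda>x. exp (\<i> * complex_of_real (s * \<phi> x)) * f x)"
proof -
  assume f: "integrable M f"
  have "\<forall>x\<in>space M. cmod (exp (\<i> * complex_of_real (s * \<phi> x))) \<le> 1" using e_norm by simp
  then show ?thesis by (rule int_bounded_mult[OF f e_meas])
qed

lemma tw_int: "integrable M f \<Longrightarrow> integrable M (twisted L \<phi> s f)"
  unfolding twisted_def by (rule tr_int[OF sys tr e_int])

lemma tw_lin:
  assumes "integrable M f1" "integrable M f2" "integrable M f3"
    and ae: "AE x in M. f3 x = a * f1 x + b * f2 x"
  shows "AE x in M. twisted L \<phi> s f3 x = a * twisted L \<phi> s f1 x + b * twisted L \<phi> s f2 x"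
  unfolding twisted_def
proof (rule tr_lin[OF sys tr])
  show "integrable M (\<lambda>x. exp (\<i> * complex_of_real (s * \<phi> x)) * f1 x)"
       "integrable M (\<lambda>x. exp (\<i> * complex_of_real (s * \<phi> x)) * f2 x)"
       "integrable M (\<lambda>x. exp (\<i> * complex_of_real (s * \<phi> x)) * f3 x)" using e_int assms by auto
  show "AE x in M. exp (\<i> * complex_of_real (s * \<phi> x)) * f3 x =
      a * (exp (\<i> * complex_of_real (s * \<phi> x)) * f1 x) + b * (exp (\<i> * complex_of_real (s * \<phi> x)) * f2 x)"
    using ae by eventually_elim (simp add: algebra_simps)
qed

lemma tw_contr: "integrable M f \<Longrightarrow> (\<integral>x. cmod (twisted L \<phi> s f x) \<partial>M) \<le> (\<integral>x. cmod (f x) \<partial>M)"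
  unfolding twisted_def using tr_contr[OF sys tr e_int, of f s] by (simp add: norm_mult e_norm)

lemma Tn_int: "integrable M f \<Longrightarrow> integrable M ((twisted L \<phi> s ^^ n) f)"
  by (induction n) (auto intro: tw_int)

lemma Tn_lin:
  assumes "integrable M f1" "integrable M f2" "integrable M f3"
    and ae: "AE x in M. f3 x = a * f1 x + b * f2 x"
  shows "AE x in M. (twisted L \<phi> s ^^ n) f3 x = a * (twisted L \<phi> s ^^ n) f1 x + b * (twisted L \<phi> s ^^ n) f2 x"
proof (induction n)
  case 0 then show ?case using ae by simp
next
  case (Suc n)
  then show ?case using tw_lin[OF Tn_int Tn_int Tn_int] assms by simp
qed

lemma Tn_contr: "integrable M f \<Longrightarrow> (\<integral>x. cmod ((twisted L \<phi> s ^^ n) f x) \<partial>M) \<le> (\<integral>x. cmod (f x) \<partial>M)"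
proof (induction n)
  case 0 then show ?case by simp
next
  case (Suc n)
  have "(\<integral>x. cmod ((twisted L \<phi> s ^^ Suc n) f x) \<partial>M) \<le> (\<integral>x. cmod ((twisted L \<phi> s ^^ n) f x) \<partial>M)"
    using tw_contr[OF Tn_int[OF Suc.prems]] by simp
  then show ?case using Suc by simp
qed

end


lemma op_norm_nonneg:
  fixes M :: "'a measure" and F :: "'a \<Rightarrow> 'a"
    and L :: "('a \<Rightarrow> complex) \<Rightarrow> ('a \<Rightarrow> complex)"
    and \<phi> :: "'a \<Rightarrow> real"
    and B1 B2 :: "('a \<Rightarrow> complex) set" and n1 n2 :: "('a \<Rightarrow> complex) \<Rightarrow> real"
  assumes sys: "prob_preserving_system M F"
    and tr: "transfer_operator M F L"
    and phi: "\<phi> \<in> borel_measurable M"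
    and ban1: "complex_banach_in_L1 M B1 n1"
    and ban2: "complex_banach_in_L1 M B2 n2"
    and emb12: "cont_embedding B1 n1 B2 n2"
    and emb2: "L1_embedding M B2 n2"
    and act1: "\<And>s f. f \<in> B1 \<Longrightarrow> twisted L \<phi> s f \<in> B1"
  shows "0 \<le> op_norm B1 n1 n2 (twisted L \<phi> s ^^ n)"
proof -
  define T where "T = twisted L \<phi> s ^^ n"
  have sub: "B1 \<subseteq> B2" using emb12 unfolding cont_embedding_def by blast
  obtain c1 where c1: "\<And>f. f\<in>B1 \<Longrightarrow> n2 f \<le> c1 * n1 f" using emb12 unfolding cont_embedding_def by blast
  obtain c2 where c2: "\<And>f. f\<in>B2 \<Longrightarrow> (\<integral>x. cmod (f x) \<partial>M) \<le> c2 * n2 f" using emb2 unfolding L1_embedding_def by blast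
  have TB1: "T f \<in> B1" if "f\<in>B1" for f unfolding T_def
    by (induction n) (use that act1 in auto)
  have int1: "integrable M f" if "f\<in>B1" for f using cb_int[OF ban1 that] .
  have int2: "integrable M f" if "f\<in>B2" for f using cb_int[OF ban2 that] .
  have Tint: "integrable M (T f)" if "integrable M f" for f unfolding T_def by (rule Tn_int[OF sys tr phi that])
  have L1b: "(\<integral>x. cmod (f x) \<partial>M) \<le> \<bar>c2\<bar> * n2 f" if "f\<in>B2" for f
  proof -
    have "c2 * n2 f \<le> \<bar>c2\<bar> * n2 f" using cb_nn[OF ban2 that] by (intro mult_right_mono) auto
    then show ?thesis using c2[OF that] by linarith
  qed
  have "\<exists>c\<ge>0. \<forall>f\<in>B1. n2 (T f) \<le> c * n1 f"
  proof (rule closed_graph[OF ban1 ban2])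
    show "T f \<in> B2" if "f\<in>B1" for f using TB1 sub that by blast
    show "AE x in M. T (\<lambda>x. a * f x + b * g x) x = a * T f x + b * T g x" if "f\<in>B1" "g\<in>B1" for a b f g
      unfolding T_def by (rule Tn_lin[OF sys tr phi]) (use int1 that cb_lin[OF ban1 that] in auto)
    fix X f g
    assume X: "\<And>k. X k \<in> B1" and f: "f\<in>B1" and g: "g\<in>B2"
      and l1: "(\<lambda>k. n1 (\<lambda>x. X k x - f x)) \<longlonglongrightarrow> 0" and l2: "(\<lambda>k. n2 (\<lambda>x. T (X k) x - g x)) \<longlonglongrightarrow> 0"
    define z where "z = (\<integral>x. cmod (T f x - g x) \<partial>M)"
    have TfB: "T f \<in> B2" "\<And>k. T (X k) \<in> B2" using TB1 sub f X by auto
    have bnd: "z \<le> \<bar>c2\<bar> * c1 * n1 (\<lambda>x. X k x - f x) + \<bar>c2\<bar> * n2 (\<lambda>x. T (X k) x - g x)" for k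
    proof -
      have dB: "(\<lambda>x. X k x - f x) \<in> B1" using cb_diff[OF ban1 X f] .
      have a: "(\<integral>x. cmod (X k x - f x) \<partial>M) \<le> \<bar>c2\<bar> * c1 * n1 (\<lambda>x. X k x - f x)"
      proof -
        have "(\<integral>x. cmod (X k x - f x) \<partial>M) \<le> \<bar>c2\<bar> * n2 (\<lambda>x. X k x - f x)" using L1b dB sub by blast
        also have "\<dots> \<le> \<bar>c2\<bar> * (c1 * n1 (\<lambda>x. X k x - f x))" using c1[OF dB] by (intro mult_left_mono) auto
        finally show ?thesis by simp
      qed
      have ae: "AE x in M. T (\<lambda>x. X k x - f x) x = 1 * T (X k) x + (-1) * T f x"
        unfolding T_def by (rule Tn_lin[OF sys tr phi]) (use int1 X f dB in auto)
      have "(\<integral>x. cmod (T (X k) x - T f x) \<partial>M) = (\<integral>x. cmod (T (\<lambda>x. X k x - f x) x) \<partial>M)"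
      proof (rule integral_cong_AE)
        show "(\<lambda>x. cmod (T (X k) x - T f x)) \<in> borel_measurable M" using Tint int1 X f by measurable
        show "(\<lambda>x. cmod (T (\<lambda>x. X k x - f x) x)) \<in> borel_measurable M" using Tint int1 dB by measurable
        show "AE x in M. cmod (T (X k) x - T f x) = cmod (T (\<lambda>x. X k x - f x) x)" using ae by eventually_elim simp
      qed
      also have "\<dots> \<le> (\<integral>x. cmod (X k x - f x) \<partial>M)" unfolding T_def by (rule Tn_contr[OF sys tr phi int1[OF dB]])
      finally have b: "(\<integral>x. cmod (T (X k) x - T f x) \<partial>M) \<le> \<bar>c2\<bar> * c1 * n1 (\<lambda>x. X k x - f x)" using a by simp
      have c: "(\<integral>x. cmod (T (X k) x - g x) \<partial>M) \<le> \<bar>c2\<bar> * n2 (\<lambda>x. T (X k) x - g x)"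
        using L1b cb_diff[OF ban2 TfB(2) g] by blast
      have iTf: "integrable M (T f)" "integrable M (T (X k))" "integrable M g" using Tint int1 f X int2 g by auto
      have "z \<le> (\<integral>x. cmod (T (X k) x - T f x) + cmod (T (X k) x - g x) \<partial>M)"
        unfolding z_def
      proof (rule integral_mono)
        show "integrable M (\<lambda>x. cmod (T f x - g x))" using iTf by simp
        show "integrable M (\<lambda>x. cmod (T (X k) x - T f x) + cmod (T (X k) x - g x))" using iTf by simp
        fix x show "cmod (T f x - g x) \<le> cmod (T (X k) x - T f x) + cmod (T (X k) x - g x)"
          using norm_triangle_ineq[of "T f x - T (X k) x" "T (X k) x - g x"]
          by (simp add: norm_minus_commute)
      qed
      also have "\<dots> = (\<integral>x. cmod (T (X k) x - T f x) \<partial>M) + (\<integral>x. cmod (T (X k) x - g x) \<partial>M)"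
        using iTf by (intro Bochner_Integration.integral_add) auto
      finally show ?thesis using b c by linarith
    qed
    have lim: "(\<lambda>k. \<bar>c2\<bar> * c1 * n1 (\<lambda>x. X k x - f x) + \<bar>c2\<bar> * n2 (\<lambda>x. T (X k) x - g x)) \<longlonglongrightarrow> 0"
      using tendsto_add_zero[OF tendsto_mult_right_zero[OF l1] tendsto_mult_right_zero[OF l2]] by simp
    have "z \<le> 0" by (rule tendsto_le[OF _ lim tendsto_const]) (use bnd in auto)
    moreover have "0 \<le> z" unfolding z_def by simp
    ultimately have "z = 0" by simp
    then have "AE x in M. cmod (T f x - g x) = 0"
      unfolding z_def using TfB g int2 by (subst (asm) integral_nonneg_eq_0_iff_AE) auto
    then show "AE x in M. T f x = g x" by simp
  qed
  then obtain c where c: "c \<ge> 0" "\<And>f. f\<in>B1 \<Longrightarrow> n2 (T f) \<le> c * n1 f" by blast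
  define S where "S = {n2 (T f) | f. f \<in> B1 \<and> n1 f \<le> 1}"
  have bdd: "bdd_above S" unfolding S_def
  proof (rule bdd_aboveI[of _ c], safe)
    fix f assume "f\<in>B1" "n1 f \<le> 1"
    then show "n2 (T f) \<le> c" using c mult_left_le[of "n1 f" c] by (meson order_trans)
  qed
  have z: "n2 (T (\<lambda>_. 0)) \<in> S" unfolding S_def using cb_zero[OF ban1] cb_n0[OF ban1] by auto
  have "0 \<le> n2 (T (\<lambda>_. 0))" using cb_nn[OF ban2] TB1 sub cb_zero[OF ban1] by blast
  also have "\<dots> \<le> Sup S" by (rule cSup_upper[OF z bdd])
  finally show ?thesis unfolding op_norm_def S_def T_def .
qed



lemma int_bound:
  fixes f :: "real \<Rightarrow> real"
  assumes R: "R \<ge> 0" and c: "c \<ge> 0" and f: "\<And>s. s\<in>S \<Longrightarrow> 0 \<le> f s \<and> f s \<le> c" and S: "S \<subseteq> {-R..R}"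
  shows "\<bar>LINT s:S|lborel. f s\<bar> \<le> c * (2 * R)"
proof -
  have nn: "0 \<le> (LINT s:S|lborel. f s)" unfolding set_lebesgue_integral_def
    by (rule Bochner_Integration.integral_nonneg) (use f in \<open>auto simp: indicator_def\<close>)
  have ci: "integrable lborel (\<lambda>s. indicator {-R..R} s * c)"
    by (intro integrable_mult_left) (simp add: integrable_indicator_iff emeasure_lborel_Icc_eq)
  have cv: "(LINT s|lborel. indicator {-R..R} s * c) = c * (2 * R)"
    using R by simp
  have "(LINT s:S|lborel. f s) \<le> c * (2 * R)"
  proof (cases "integrable lborel (\<lambda>s. indicator S s *\<^sub>R f s)")
    case True
    have "(LINT s:S|lborel. f s) \<le> (LINT s|lborel. indicator {-R..R} s * c)"
      unfolding set_lebesgue_integral_def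
    proof (rule integral_mono[OF True ci])
      fix s :: real
      show "indicator S s *\<^sub>R f s \<le> indicator {-R..R} s * c"
        using f[of s] S c by (cases "s\<in>S") (auto simp: indicator_def)
    qed
    then show ?thesis using cv by linarith
  next
    case False
    then show ?thesis unfolding set_lebesgue_integral_def using not_integrable_integral_eq[OF False] R c by simp
  qed
  then show ?thesis using nn by simp
qed

theorem lemma4p7:
  fixes M :: "'a measure" and F :: "'a \<Rightarrow> 'a"
    and L :: "('a \<Rightarrow> complex) \<Rightarrow> ('a \<Rightarrow> complex)"
    and \<phi> :: "'a \<Rightarrow> real"
    and B1 B2 :: "('a \<Rightarrow> complex) set" and n1 n2 :: "('a \<Rightarrow> complex) \<Rightarrow> real"
    and \<alpha>1 K C \<alpha> :: real and n0 :: nat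
  assumes sys: "prob_preserving_system M F"
    and tr: "transfer_operator M F L"
    and phi_meas: "\<phi> \<in> borel_measurable M"
    and ban1: "complex_banach_in_L1 M B1 n1"
    and ban2: "complex_banach_in_L1 M B2 n2"
    and emb12: "cont_embedding B1 n1 B2 n2"
    and emb2: "L1_embedding M B2 n2"
    and one: "(\<lambda>_. 1) \<in> B1"
    and act1: "\<And>s f. f \<in> B1 \<Longrightarrow> twisted L \<phi> s f \<in> B1"
    and act2: "\<And>s f. f \<in> B2 \<Longrightarrow> twisted L \<phi> s f \<in> B2"
    and a1: "0 < \<alpha>1" "\<alpha>1 \<le> 1" and K: "K > 0" and C: "C > 0" and a: "\<alpha> > 0"
    and bound: "\<And>n s. n \<ge> n0 \<Longrightarrow> \<bar>s\<bar> > K \<Longrightarrow>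
        op_norm B1 n1 n2 (twisted L \<phi> s ^^ n) \<le> C * \<bar>s\<bar> powr \<alpha> * exp (- C * real n powr \<alpha>1)"
  shows "(\<exists>K' C' \<alpha>' \<alpha>1' \<delta> n1'. K' > 0 \<and> C' > 0 \<and> \<alpha>' \<ge> 0 \<and> 0 < \<alpha>1' \<and> \<alpha>1' \<le> 1 \<and> \<delta> > 0 \<and>
           (\<forall>s n. \<bar>s\<bar> > K' \<and> n \<ge> n1' \<longrightarrow>
              op_norm B1 n1 n2 (twisted L \<phi> s ^^ n)
                \<le> C' * \<bar>s\<bar> powr \<alpha>' * exp (- (real n powr \<alpha>1') * \<delta> * \<bar>s\<bar> powr (- \<alpha>'))))
       \<and> (\<forall>r d1 B. r \<ge> 0 \<longrightarrow> 0 \<le> d1 \<longrightarrow> d1 \<le> 1 \<longrightarrow> B > 0 \<longrightarrow>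
           (\<exists>K''>0. (\<lambda>n::nat. LINT s:{s. K'' < \<bar>s\<bar> \<and> \<bar>s\<bar> < B * real n powr ((r - 1) / 2)}|lborel.
                  op_norm B1 n1 n2 (twisted L \<phi> s ^^ n) / \<bar>s\<bar> powr d1)
              \<in> o(\<lambda>n. real n powr (- r / 2))))"
proof -
  have on_nn: "0 \<le> op_norm B1 n1 n2 (twisted L \<phi> s ^^ n)" for s n
    by (rule op_norm_nonneg[OF sys tr phi_meas ban1 ban2 emb12 emb2 act1])
  define K1 where "K1 = max K 1"
  have K1: "K1 > 0" "K1 \<ge> 1" "K1 \<ge> K" unfolding K1_def by auto
  have part1: "\<forall>s n. \<bar>s\<bar> > K1 \<and> n \<ge> n0 \<longrightarrow>
              op_norm B1 n1 n2 (twisted L \<phi> s ^^ n)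
                \<le> C * \<bar>s\<bar> powr \<alpha> * exp (- (real n powr \<alpha>1) * C * \<bar>s\<bar> powr (- \<alpha>))"
  proof (intro allI impI, elim conjE)
    fix s :: real and n :: nat assume s: "\<bar>s\<bar> > K1" and n: "n \<ge> n0"
    have ge: "\<bar>s\<bar> powr \<alpha> \<ge> 1" using s K1 a by (intro ge_one_powr_ge_zero) auto
    have "\<bar>s\<bar> powr (- \<alpha>) = inverse (\<bar>s\<bar> powr \<alpha>)" by (simp add: powr_minus)
    then have "\<bar>s\<bar> powr (- \<alpha>) \<le> 1" using ge by (simp add: inverse_le_1_iff)
    then have "real n powr \<alpha>1 * C * \<bar>s\<bar> powr (- \<alpha>) \<le> real n powr \<alpha>1 * C * 1"
      using C by (intro mult_left_mono) auto
    then have "exp (- C * real n powr \<alpha>1) \<le> exp (- (real n powr \<alpha>1) * C * \<bar>s\<bar> powr (- \<alpha>))"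
      by (simp add: mult.commute)
    then have "C * \<bar>s\<bar> powr \<alpha> * exp (- C * real n powr \<alpha>1) \<le> C * \<bar>s\<bar> powr \<alpha> * exp (- (real n powr \<alpha>1) * C * \<bar>s\<bar> powr (- \<alpha>))"
      using C by (intro mult_left_mono) auto
    moreover have "op_norm B1 n1 n2 (twisted L \<phi> s ^^ n) \<le> C * \<bar>s\<bar> powr \<alpha> * exp (- C * real n powr \<alpha>1)"
      using bound[OF n] s K1 by simp
    ultimately show "op_norm B1 n1 n2 (twisted L \<phi> s ^^ n) \<le> C * \<bar>s\<bar> powr \<alpha> * exp (- (real n powr \<alpha>1) * C * \<bar>s\<bar> powr (- \<alpha>))"
      by linarith
  qed
  have part2: "\<forall>r d1 B. r \<ge> 0 \<longrightarrow> 0 \<le> d1 \<longrightarrow> d1 \<le> 1 \<longrightarrow> B > 0 \<longrightarrow>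
           (\<exists>K''>0. (\<lambda>n::nat. LINT s:{s. K'' < \<bar>s\<bar> \<and> \<bar>s\<bar> < B * real n powr ((r - 1) / 2)}|lborel.
                  op_norm B1 n1 n2 (twisted L \<phi> s ^^ n) / \<bar>s\<bar> powr d1)
              \<in> o(\<lambda>n. real n powr (- r / 2)))"
  proof (intro allI impI)
    fix r d1 B :: real assume r: "r \<ge> 0" and d1: "0 \<le> d1" "d1 \<le> 1" and B: "B > 0"
    define g where "g n = 2 * C * (B * real n powr ((r-1)/2)) powr (1+\<alpha>) * exp(-C * real n powr \<alpha>1)" for n :: nat
    have go: "g \<in> o(\<lambda>n. real n powr (- r / 2))" unfolding g_def using C B a a1 by real_asymp
    have "(\<lambda>n::nat. LINT s:{s. K1 < \<bar>s\<bar> \<and> \<bar>s\<bar> < B * real n powr ((r - 1) / 2)}|lborel.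
                  op_norm B1 n1 n2 (twisted L \<phi> s ^^ n) / \<bar>s\<bar> powr d1) \<in> O(g)"
    proof (rule bigoI[of _ 1])
      show "\<forall>\<^sub>F n in at_top. norm (LINT s:{s. K1 < \<bar>s\<bar> \<and> \<bar>s\<bar> < B * real n powr ((r - 1) / 2)}|lborel.
                  op_norm B1 n1 n2 (twisted L \<phi> s ^^ n) / \<bar>s\<bar> powr d1) \<le> 1 * norm (g n)"
        unfolding eventually_at_top_linorder
      proof (intro exI[of _ n0] allI impI)
        fix n assume n: "n \<ge> n0"
        define R where "R = B * real n powr ((r - 1) / 2)"
        define c where "c = C * R powr \<alpha> * exp (- C * real n powr \<alpha>1)"
        have R: "R \<ge> 0" unfolding R_def using B by simp
        have c: "c \<ge> 0" unfolding c_def using C by simp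
        have "\<bar>LINT s:{s. K1 < \<bar>s\<bar> \<and> \<bar>s\<bar> < R}|lborel. op_norm B1 n1 n2 (twisted L \<phi> s ^^ n) / \<bar>s\<bar> powr d1\<bar> \<le> c * (2 * R)"
        proof (rule int_bound[OF R c])
          show "{s. K1 < \<bar>s\<bar> \<and> \<bar>s\<bar> < R} \<subseteq> {-R..R}" by auto
          fix s assume s: "s \<in> {s. K1 < \<bar>s\<bar> \<and> \<bar>s\<bar> < R}"
          have s1: "\<bar>s\<bar> \<ge> 1" "\<bar>s\<bar> > K" "\<bar>s\<bar> \<le> R" using s K1 by auto
          have pd: "\<bar>s\<bar> powr d1 \<ge> 1" using s1 d1 by (intro ge_one_powr_ge_zero) auto
          have o0: "0 \<le> op_norm B1 n1 n2 (twisted L \<phi> s ^^ n)" by (rule on_nn)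
          have "op_norm B1 n1 n2 (twisted L \<phi> s ^^ n) / \<bar>s\<bar> powr d1 \<le> op_norm B1 n1 n2 (twisted L \<phi> s ^^ n)"
            using divide_left_mono[OF pd o0] s1(1) by (cases "s = 0") auto
          also have "\<dots> \<le> C * \<bar>s\<bar> powr \<alpha> * exp (- C * real n powr \<alpha>1)" using bound[OF n s1(2)] .
          also have "\<dots> \<le> c" unfolding c_def using C s1 a by (intro mult_right_mono mult_left_mono powr_mono2) auto
          finally show "0 \<le> op_norm B1 n1 n2 (twisted L \<phi> s ^^ n) / \<bar>s\<bar> powr d1 \<and>
               op_norm B1 n1 n2 (twisted L \<phi> s ^^ n) / \<bar>s\<bar> powr d1 \<le> c"
            using o0 pd by simp
        qed
        also have "c * (2 * R) = g n"
        proof -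
          have "R powr (1 + \<alpha>) = R * R powr \<alpha>" using R by (simp add: powr_add)
          then show ?thesis unfolding c_def g_def R_def[symmetric] by (simp add: algebra_simps)
        qed
        also have "\<dots> \<le> 1 * norm (g n)" by simp
        finally show "norm (LINT s:{s. K1 < \<bar>s\<bar> \<and> \<bar>s\<bar> < B * real n powr ((r - 1) / 2)}|lborel.
                  op_norm B1 n1 n2 (twisted L \<phi> s ^^ n) / \<bar>s\<bar> powr d1) \<le> 1 * norm (g n)"
          unfolding R_def by simp
      qed
    qed
    then have "(\<lambda>n::nat. LINT s:{s. K1 < \<bar>s\<bar> \<and> \<bar>s\<bar> < B * real n powr ((r - 1) / 2)}|lborel.
                  op_norm B1 n1 n2 (twisted L \<phi> s ^^ n) / \<bar>s\<bar> powr d1) \<in> o(\<lambda>n. real n powr (- r / 2))"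
      using go by (rule landau_o.big_small_trans)
    then show "\<exists>K''>0. (\<lambda>n::nat. LINT s:{s. K'' < \<bar>s\<bar> \<and> \<bar>s\<bar> < B * real n powr ((r - 1) / 2)}|lborel.
                  op_norm B1 n1 n2 (twisted L \<phi> s ^^ n) / \<bar>s\<bar> powr d1)
              \<in> o(\<lambda>n. real n powr (- r / 2))" using K1 by blast
  qed
  have "C > 0" "\<alpha> \<ge> 0" using C a by auto
  then show ?thesis using part1 part2 K1 a1 by blast
qed

end
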